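(* Let $\Lambda=(\alpha_1,\alpha_2,\beta_2,\beta_3,\beta_4)$ be five distinct real numbers with $\alpha_2+\beta_2\neq\beta_3+\beta_4$. Extend to sequences by $\alpha_i:=\alpha_1$ for odd $i$, $\alpha_i:=\alpha_2$ for even $i$, and $\beta_i:=\beta_j$ whenever $j\in\{2,3,4\}$ and $i\equiv j\pmod 3$. Let $n\ge1$, let $a_1,\dots,a_n\in\mathbb R$ and $b_2,\dots,b_n>0$, and let $C_1,\dots,C_n$ be defined by $C_1=(a_1)$ and $C_{k+1}=\begin{pmatrix}a_{k+1}& b_{k+1}{\bf e}_1^\top\\ {\bf e}_1 & C_k\end{pmatrix}$. The following are equivalent: (i) $\sigma(C_1)=\{\alpha_1\}$ and $\sigma(C_i)\cap\{\alpha_1,\alpha_2,\beta_2,\beta_3,\beta_4\}=\{\alpha_i,\beta_i\}$ for $i=2,\dots,n$; (ii) for $1\le i\le n$, $a_i=\alpha_1$ if $i$ is odd, $a_2=-\alpha_1+\alpha_2+\beta_2$, and $a_i=\alpha_2$ if $i>2$ is even; and for $2\le i\le n$, $b_2=(\beta_2-\alpha_1)(\alpha_1-\alpha_2)$, $b_3=(\beta_3-\alpha_2)(\beta_3-\beta_2)$, $b_4=\dfrac{(\beta_4-\alpha_1)(\beta_3-\beta_4)(\alpha_2+\beta_2-\beta_3-\beta_4)}{\beta_4-\beta_2}$, and $b_i=(\beta_j-\alpha_1)(\beta_j-\alpha_2)$ when $i>4$, $j\in\{2,3,4\}$, $i\equiv j\pmod 3$. Moreover, when these conditions hold: if $n\ge4$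 then $\Lambda\in\mathcal B$; if $n=3$ then $(\alpha_1,\alpha_2,\beta_2,\beta_3)\in\mathcal B_3$; if $n=2$ then $(\alpha_1,\alpha_2,\beta_2)\in\mathcal B_2$.
   Context: ${\bf e}_1$ denotes the first standard basis vector of the appropriate length. $\mathcal B$ is the set of all $(\alpha_1,\alpha_2,\beta_2,\beta_3,\beta_4)\in\mathbb R^5$ with five distinct entries satisfying one of the following twelve conditions: $\beta_2<\alpha_1<\alpha_2<\beta_3<\beta_4$; $\beta_2<\beta_4<\alpha_1<\alpha_2<\beta_3$; $\beta_4<\beta_2<\alpha_1<\alpha_2<\beta_3$ and $\alpha_2+\beta_2>\beta_4+\beta_3$; $\beta_3<\beta_2<\alpha_1<\alpha_2<\beta_4$ and $\alpha_2+\beta_2<\beta_4+\beta_3$; $\beta_3<\beta_2<\beta_4<\alpha_1<\alpha_2$; $\beta_4<\beta_3<\beta_2<\alpha_1<\alpha_2$; $\beta_4<\beta_3<\alpha_2<\alpha_1<\beta_2$; $\beta_3<\alpha_2<\alpha_1<\beta_4<\beta_2$; $\beta_3<\alpha_2<\alpha_1<\beta_2<\beta_4$ and $\alpha_2+\beta_2<\beta_4+\beta_3$; $\beta_4<\alpha_2<\alpha_1<\beta_2<\beta_3$ and $\alpha_2+\beta_2>\beta_4+\beta_3$; $\alpha_2<\alpha_1<\beta_4<\beta_2<\beta_3$; $\alpha_2<\alpha_1<\beta_2<\beta_3<\beta_4$. $\mathcal B_3$ is the set of $(\alpha_1,\alpha_2,\beta_2,\beta_3)$ such that $(\alpha_1,\alpha_2,\beta_2,\beta_3,\beta_4)\in\mathcal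 B$ for some $\beta_4$; $\mathcal B_2$ is the set of $(\alpha_1,\alpha_2,\beta_2)$ such that $(\alpha_1,\alpha_2,\beta_2,\beta_3,\beta_4)\in\mathcal B$ for some $\beta_3,\beta_4$. *)

theory Defs
  imports "Jordan_Normal_Form.Spectral_Radius"
begin

text \<open>The matrices C_k (k x k), built recursively:
  C_1 = (a_1),  C_(k+1) = [[a_(k+1), b_(k+1) e_1^T], [e_1, C_k]].
  Sequences a, b are indexed from 1 (index 0 unused).\<close>
fun Cmat :: "(nat \<Rightarrow> real) \<Rightarrow> (nat \<Rightarrow> real) \<Rightarrow> nat \<Rightarrow> real mat" where
  "Cmat a b 0 = 0\<^sub>m 0 0"
| "Cmat a b (Suc 0) = mat 1 1 (\<lambda>_. a 1)"
| "Cmat a b (Suc (Suc k)) =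
     four_block_mat
       (mat 1 1 (\<lambda>_. a (k + 2)))
       (mat 1 (k + 1) (\<lambda>(i, j). if j = 0 then b (k + 2) else 0))
       (mat (k + 1) 1 (\<lambda>(i, j). if i = 0 then 1 else 0))
       (Cmat a b (Suc k))"

definition alpha_seq :: "real \<Rightarrow> real \<Rightarrow> nat \<Rightarrow> real" where
  "alpha_seq \<alpha>1 \<alpha>2 i = (if odd i then \<alpha>1 else \<alpha>2)"

definition beta_seq :: "real \<Rightarrow> real \<Rightarrow> real \<Rightarrow> nat \<Rightarrow> real" where
  "beta_seq \<beta>2 \<beta>3 \<beta>4 i =
     (if i mod 3 = 2 then \<beta>2 else if i mod 3 = 0 then \<beta>3 else \<beta>4)"

definition setB :: "(real \<times> real \<times> real \<times> real \<times> real) set" where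
  "setB = {(\<alpha>1, \<alpha>2, \<beta>2, \<beta>3, \<beta>4).
     distinct [\<alpha>1, \<alpha>2, \<beta>2, \<beta>3, \<beta>4] \<and>
     ((\<beta>2 < \<alpha>1 \<and> \<alpha>1 < \<alpha>2 \<and> \<alpha>2 < \<beta>3 \<and> \<beta>3 < \<beta>4)
    \<or> (\<beta>2 < \<beta>4 \<and> \<beta>4 < \<alpha>1 \<and> \<alpha>1 < \<alpha>2 \<and> \<alpha>2 < \<beta>3)
    \<or> (\<beta>4 < \<beta>2 \<and> \<beta>2 < \<alpha>1 \<and> \<alpha>1 < \<alpha>2 \<and> \<alpha>2 < \<beta>3 \<and> \<alpha>2 + \<beta>2 > \<beta>4 + \<beta>3)
    \<or> (\<beta>3 < \<beta>2 \<and> \<beta>2 < \<alpha>1 \<and> \<alpha>1 < \<alpha>2 \<and> \<alpha>2 < \<beta>4 \<and> \<alpha>2 + \<beta>2 < \<beta>4 + \<beta>3)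
    \<or> (\<beta>3 < \<beta>2 \<and> \<beta>2 < \<beta>4 \<and> \<beta>4 < \<alpha>1 \<and> \<alpha>1 < \<alpha>2)
    \<or> (\<beta>4 < \<beta>3 \<and> \<beta>3 < \<beta>2 \<and> \<beta>2 < \<alpha>1 \<and> \<alpha>1 < \<alpha>2)
    \<or> (\<beta>4 < \<beta>3 \<and> \<beta>3 < \<alpha>2 \<and> \<alpha>2 < \<alpha>1 \<and> \<alpha>1 < \<beta>2)
    \<or> (\<beta>3 < \<alpha>2 \<and> \<alpha>2 < \<alpha>1 \<and> \<alpha>1 < \<beta>4 \<and> \<beta>4 < \<beta>2)
    \<or> (\<beta>3 < \<alpha>2 \<and> \<alpha>2 < \<alpha>1 \<and> \<alpha>1 < \<beta>2 \<and> \<beta>2 < \<beta>4 \<and> \<alpha>2 + \<beta>2 < \<beta>4 + \<beta>3)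
    \<or> (\<beta>4 < \<alpha>2 \<and> \<alpha>2 < \<alpha>1 \<and> \<alpha>1 < \<beta>2 \<and> \<beta>2 < \<beta>3 \<and> \<alpha>2 + \<beta>2 > \<beta>4 + \<beta>3)
    \<or> (\<alpha>2 < \<alpha>1 \<and> \<alpha>1 < \<beta>4 \<and> \<beta>4 < \<beta>2 \<and> \<beta>2 < \<beta>3)
    \<or> (\<alpha>2 < \<alpha>1 \<and> \<alpha>1 < \<beta>2 \<and> \<beta>2 < \<beta>3 \<and> \<beta>3 < \<beta>4))}"

definition setB3 :: "(real \<times> real \<times> real \<times> real) set" where
  "setB3 = {(\<alpha>1, \<alpha>2, \<beta>2, \<beta>3). \<exists>\<beta>4. (\<alpha>1, \<alpha>2, \<beta>2, \<beta>3, \<beta>4) \<in> setB}"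

definition setB2 :: "(real \<times> real \<times> real) set" where
  "setB2 = {(\<alpha>1, \<alpha>2, \<beta>2). \<exists>\<beta>3 \<beta>4. (\<alpha>1, \<alpha>2, \<beta>2, \<beta>3, \<beta>4) \<in> setB}"

end

theory Submission
  imports Defs
begin

lemma Cmat_dims: "dim_row (Cmat a b k) = k \<and> dim_col (Cmat a b k) = k"
  by (induction a b k rule: Cmat.induct) auto

lemma Cmat_carrier: "Cmat a b k \<in> carrier_mat k k"
  using Cmat_dims unfolding carrier_mat_def by auto

lemma Cmat_index: "i < k \<Longrightarrow> j < k \<Longrightarrow> Cmat a b k $$ (i,j) =
   (if i = j then a (k-i) else if j = Suc i then b (k-i) else if i = Suc j then 1 else 0)"
proof (induction a b k arbitrary: i j rule: Cmat.induct)
  case (3 a b k)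
  show ?case using 3 Cmat_dims[of a b "Suc k"]
    by (cases i; cases j) (auto simp: Suc_diff_Suc)
qed auto

lemma tri_sum:
  fixes w :: "nat \<Rightarrow> real"
  assumes "i < k"
  shows "(\<Sum>j\<in>{0..<k}. (if i = j then A else if j = Suc i then B else if i = Suc j then 1 else 0) * w j)
     = A * w i + (if Suc i < k then B * w (Suc i) else 0) + (if 0 < i then w (i - 1) else 0)"
proof -
  have "(\<Sum>j\<in>{0..<k}. (if i = j then A else if j = Suc i then B else if i = Suc j then 1 else 0) * w j)
    = (\<Sum>j\<in>{0..<k}. (if j = i then A * w i else 0) + (if j = Suc i then B * w (Suc i) else 0)
        + (if j = i - 1 then (if 0 < i then w (i - 1) else 0) else 0))"
    by (rule sum.cong) auto
  also have "\<dots> = A * w i + (if Suc i < k then B * w (Suc i) else 0) + (if 0 < i then w (i - 1) else 0)"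
    unfolding sum.distrib using assms by (subst sum.delta, simp)+ auto
  finally show ?thesis .
qed

lemma Cmat_mult: "i < k \<Longrightarrow> v \<in> carrier_vec k \<Longrightarrow> (Cmat a b k *\<^sub>v v) $ i =
   a (k-i) * v$i + (if Suc i < k then b (k-i) * v $ (Suc i) else 0) + (if 0 < i then v $ (i - 1) else 0)"
proof -
  assume i: "i < k" and v: "v \<in> carrier_vec k"
  have "(Cmat a b k *\<^sub>v v) $ i = (\<Sum>j\<in>{0..<k}. Cmat a b k $$ (i,j) * v $ j)"
    using i v Cmat_dims[of a b k] by (simp add: scalar_prod_def)
  also have "\<dots> = (\<Sum>j\<in>{0..<k}. (if i = j then a (k-i) else if j = Suc i then b (k-i) else if i = Suc j then 1 else 0) * v $ j)"
    using i by (intro sum.cong) (auto simp: Cmat_index)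
  also have "\<dots> = a (k-i) * v$i + (if Suc i < k then b (k-i) * v $ (Suc i) else 0) + (if 0 < i then v $ (i - 1) else 0)" by (rule tri_sum[OF i])
  finally show ?thesis .
qed

fun P :: "(nat \<Rightarrow> real) \<Rightarrow> (nat \<Rightarrow> real) \<Rightarrow> nat \<Rightarrow> real \<Rightarrow> real" where
  "P a b 0 x = 1"
| "P a b (Suc 0) x = x - a 1"
| "P a b (Suc (Suc k)) x = (x - a (k+2)) * P a b (Suc k) x - b (k+2) * P a b k x"

lemma P_step: "P a b (Suc m) x = (x - a (Suc m)) * P a b m x - (if m = 0 then 0 else b (Suc m) * P a b (m - 1) x)"
  by (cases m) auto

lemma eig_P:
  assumes k: "1 \<le> k"
  shows "eigenvalue (Cmat a b k) x \<longleftrightarrow> P a b k x = 0"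
proof
  assume "eigenvalue (Cmat a b k) x"
  then obtain v where v: "v \<in> carrier_vec k" "v \<noteq> 0\<^sub>v k" "Cmat a b k *\<^sub>v v = x \<cdot>\<^sub>v v"
    unfolding eigenvalue_def eigenvector_def using Cmat_dims[of a b k] by auto
  have row: "a (k-i) * v$i + (if Suc i < k then b (k-i) * v $ (Suc i) else 0) + (if 0 < i then v $ (i - 1) else 0) = x * v $ i"
    if "i < k" for i
  proof -
    have "(Cmat a b k *\<^sub>v v) $ i = (x \<cdot>\<^sub>v v) $ i" using v(3) by simp
    then show ?thesis using Cmat_mult[OF that v(1)] that v(1) by simp
  qed
  define c where "c = v $ (k - 1)"
  have main: "m < k \<Longrightarrow> v $ (k - 1 - m) = P a b m x * c" for m
  proof (induction m rule: less_induct)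
    case (less m)
    show ?case
    proof (cases m)
      case 0 then show ?thesis by (simp add: c_def)
    next
      case (Suc m')
      define i where "i = k - 1 - m'"
      have i: "i < k" "0 < i" "k - i = Suc m'" "i - 1 = k - 1 - m" using less.prems Suc unfolding i_def by auto
      have r: "a (Suc m') * v$i + (if Suc i < k then b (Suc m') * v $ (Suc i) else 0) + v $ (k - 1 - m) = x * v $ i"
        using row[OF i(1)] i(2) unfolding i(3) i(4) by simp
      have vi: "v $ i = P a b m' x * c" using less.IH[of m'] Suc less.prems unfolding i_def by auto
      have vi1: "Suc i < k \<Longrightarrow> v $ Suc i = P a b (m' - 1) x * c" "Suc i < k \<longleftrightarrow> m' \<noteq> 0"
        using less.IH[of "m' - 1"] Suc less.prems unfolding i_def by (auto simp: Suc_diff_Suc)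
      have Pm: "P a b m x = (x - a (Suc m')) * P a b m' x - (if m' = 0 then 0 else b (Suc m') * P a b (m' - 1) x)"
        using Suc P_step by simp
      show ?thesis unfolding Pm using r vi vi1
        by (cases "m' = 0") (auto simp: algebra_simps)
    qed
  qed
  have r0: "a k * v$0 + (if 1 < k then b k * v $ 1 else 0) = x * v $ 0" using row[of 0] k by (cases "1 < k") auto
  have "P a b k x * c = 0"
  proof -
    obtain m where m: "k = Suc m" using k by (cases k) auto
    have "v $ 0 = P a b m x * c" using main[of m] m by simp
    moreover have "m \<noteq> 0 \<Longrightarrow> v $ 1 = P a b (m - 1) x * c" using main[of "m - 1"] m by simp
    ultimately show ?thesis using r0 unfolding m P_step
      by (cases "m = 0") (auto simp: algebra_simps)
  qed
  moreover have "c \<noteq> 0"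
  proof
    assume "c = 0"
    have "v $ i = 0" if "i < k" for i
    proof -
      have "v $ (k - 1 - (k - 1 - i)) = P a b (k - 1 - i) x * c" using main[of "k - 1 - i"] that by simp
      moreover have "k - 1 - (k - 1 - i) = i" using that by simp
      ultimately show ?thesis using \<open>c = 0\<close> by simp
    qed
    then have "v = 0\<^sub>v k" using v(1) by (intro eq_vecI) auto
    then show False using v(2) by simp
  qed
  ultimately show "P a b k x = 0" by simp
next
  assume Pk: "P a b k x = 0"
  define v where "v = vec k (\<lambda>i. P a b (k - 1 - i) x)"
  have vc: "v \<in> carrier_vec k" unfolding v_def by simp
  have "v $ (k - 1) = 1" unfolding v_def using k by simp
  then have vn: "v \<noteq> 0\<^sub>v k" using k vc by (auto simp: vec_eq_iff intro!: exI[of _ "k - 1"])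
  have "Cmat a b k *\<^sub>v v = x \<cdot>\<^sub>v v"
  proof (rule eq_vecI)
    show "dim_vec (Cmat a b k *\<^sub>v v) = dim_vec (x \<cdot>\<^sub>v v)" using Cmat_dims[of a b k] vc by simp
    fix i assume "i < dim_vec (x \<cdot>\<^sub>v v)"
    then have i: "i < k" using vc by simp
    define m where "m = k - 1 - i"
    have km: "k - i = Suc m" "Suc i < k \<longleftrightarrow> m \<noteq> 0" using i unfolding m_def by auto
    have e1: "v $ i = P a b m x" using i unfolding v_def m_def by simp
    have e2: "m \<noteq> 0 \<Longrightarrow> v $ Suc i = P a b (m - 1) x" using km(2) unfolding v_def m_def by simp
    have e3: "0 < i \<Longrightarrow> v $ (i - 1) = P a b (Suc m) x"
    proof -
      assume i0: "0 < i"
      have "k - 1 - (i - 1) = Suc m" using i i0 unfolding m_def by arith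
      moreover have "v $ (i - 1) = P a b (k - 1 - (i - 1)) x" using i unfolding v_def by simp
      ultimately show ?thesis by simp
    qed
    have e4: "i = 0 \<Longrightarrow> P a b (Suc m) x = 0" using Pk km by simp
    show "(Cmat a b k *\<^sub>v v) $ i = (x \<cdot>\<^sub>v v) $ i"
      unfolding Cmat_mult[OF i vc] km using e1 e2 e3 e4 i vc unfolding P_step
      by (cases "m = 0"; cases "i = 0") (auto simp: algebra_simps)
  qed
  then show "eigenvalue (Cmat a b k) x" unfolding eigenvalue_def eigenvector_def
    using vc vn Cmat_dims[of a b k] by auto
qed

lemma spec_P: "1 \<le> k \<Longrightarrow> spectrum (Cmat a b k) = {x. P a b k x = 0}"
  unfolding spectrum_def using eig_P by auto

lemma sign3: "(u::real) \<noteq> 0 \<Longrightarrow> v \<noteq> 0 \<Longrightarrow> w \<noteq> 0 \<Longrightarrow>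
  (0 < u*v*w \<longleftrightarrow> ((u>0)=(v>0))=(w>0)) \<and> (u*v*w < 0 \<longleftrightarrow> \<not>(((u>0)=(v>0))=(w>0)))"
  by (cases "u > 0"; cases "v > 0"; cases "w > 0") (auto simp: zero_less_mult_iff mult_less_0_iff)

lemma setB_lemma:
  fixes \<alpha>1 \<alpha>2 \<beta>2 \<beta>3 \<beta>4 :: real
  assumes d: "distinct [\<alpha>1, \<alpha>2, \<beta>2, \<beta>3, \<beta>4]"
    and s: "\<alpha>2 + \<beta>2 \<noteq> \<beta>3 + \<beta>4"
    and h2: "(\<beta>2 - \<alpha>1) * (\<alpha>1 - \<alpha>2) > 0"
    and h3: "(\<beta>3 - \<alpha>2) * (\<beta>3 - \<beta>2) > 0"
    and h4: "(\<beta>4 - \<alpha>1) * (\<beta>3 - \<beta>4) * (\<alpha>2 + \<beta>2 - \<beta>3 - \<beta>4) / (\<beta>4 - \<beta>2) > 0"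
  shows "(\<alpha>1, \<alpha>2, \<beta>2, \<beta>3, \<beta>4) \<in> setB"
proof -
  have g2: "(\<beta>2 < \<alpha>1 \<and> \<alpha>1 < \<alpha>2) \<or> (\<alpha>2 < \<alpha>1 \<and> \<alpha>1 < \<beta>2)"
    using h2 by (auto simp: zero_less_mult_iff)
  have g3: "(\<beta>3 > \<alpha>2 \<and> \<beta>3 > \<beta>2) \<or> (\<beta>3 < \<alpha>2 \<and> \<beta>3 < \<beta>2)"
    using h3 by (auto simp: zero_less_mult_iff)
  have g4: "((\<beta>4 - \<alpha>1) * (\<beta>3 - \<beta>4) * (\<alpha>2 + \<beta>2 - \<beta>3 - \<beta>4) > 0 \<and> \<beta>4 > \<beta>2) \<or>
            ((\<beta>4 - \<alpha>1) * (\<beta>3 - \<beta>4) * (\<alpha>2 + \<beta>2 - \<beta>3 - \<beta>4) < 0 \<and> \<beta>4 < \<beta>2)"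
    using h4 by (auto simp: zero_less_divide_iff)
  have g5: "(\<beta>4 - \<alpha>1) * (\<beta>3 - \<beta>4) * (\<alpha>2 + \<beta>2 - \<beta>3 - \<beta>4) > 0 \<longleftrightarrow>
      ((\<beta>4 > \<alpha>1) = (\<beta>3 > \<beta>4)) = (\<alpha>2 + \<beta>2 > \<beta>3 + \<beta>4)"
    using sign3[of "\<beta>4 - \<alpha>1" "\<beta>3 - \<beta>4" "\<alpha>2 + \<beta>2 - \<beta>3 - \<beta>4"] d s by auto
  have g6: "(\<beta>4 - \<alpha>1) * (\<beta>3 - \<beta>4) * (\<alpha>2 + \<beta>2 - \<beta>3 - \<beta>4) < 0 \<longleftrightarrow>
      \<not> (((\<beta>4 > \<alpha>1) = (\<beta>3 > \<beta>4)) = (\<alpha>2 + \<beta>2 > \<beta>3 + \<beta>4))"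
    using sign3[of "\<beta>4 - \<alpha>1" "\<beta>3 - \<beta>4" "\<alpha>2 + \<beta>2 - \<beta>3 - \<beta>4"] d s by auto
  have dd: "\<alpha>1 \<noteq> \<alpha>2 \<and> \<alpha>1 \<noteq> \<beta>2 \<and> \<alpha>1 \<noteq> \<beta>3 \<and> \<alpha>1 \<noteq> \<beta>4 \<and> \<alpha>2 \<noteq> \<beta>2 \<and> \<alpha>2 \<noteq> \<beta>3 \<and> \<alpha>2 \<noteq> \<beta>4
     \<and> \<beta>2 \<noteq> \<beta>3 \<and> \<beta>2 \<noteq> \<beta>4 \<and> \<beta>3 \<noteq> \<beta>4" using d by auto
  have "((\<beta>2 < \<alpha>1 \<and> \<alpha>1 < \<alpha>2 \<and> \<alpha>2 < \<beta>3 \<and> \<beta>3 < \<beta>4)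
    \<or> (\<beta>2 < \<beta>4 \<and> \<beta>4 < \<alpha>1 \<and> \<alpha>1 < \<alpha>2 \<and> \<alpha>2 < \<beta>3)
    \<or> (\<beta>4 < \<beta>2 \<and> \<beta>2 < \<alpha>1 \<and> \<alpha>1 < \<alpha>2 \<and> \<alpha>2 < \<beta>3 \<and> \<alpha>2 + \<beta>2 > \<beta>4 + \<beta>3)
    \<or> (\<beta>3 < \<beta>2 \<and> \<beta>2 < \<alpha>1 \<and> \<alpha>1 < \<alpha>2 \<and> \<alpha>2 < \<beta>4 \<and> \<alpha>2 + \<beta>2 < \<beta>4 + \<beta>3)
    \<or> (\<beta>3 < \<beta>2 \<and> \<beta>2 < \<beta>4 \<and> \<beta>4 < \<alpha>1 \<and> \<alpha>1 < \<alpha>2)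
    \<or> (\<beta>4 < \<beta>3 \<and> \<beta>3 < \<beta>2 \<and> \<beta>2 < \<alpha>1 \<and> \<alpha>1 < \<alpha>2)
    \<or> (\<beta>4 < \<beta>3 \<and> \<beta>3 < \<alpha>2 \<and> \<alpha>2 < \<alpha>1 \<and> \<alpha>1 < \<beta>2)
    \<or> (\<beta>3 < \<alpha>2 \<and> \<alpha>2 < \<alpha>1 \<and> \<alpha>1 < \<beta>4 \<and> \<beta>4 < \<beta>2)
    \<or> (\<beta>3 < \<alpha>2 \<and> \<alpha>2 < \<alpha>1 \<and> \<alpha>1 < \<beta>2 \<and> \<beta>2 < \<beta>4 \<and> \<alpha>2 + \<beta>2 < \<beta>4 + \<beta>3)
    \<or> (\<beta>4 < \<alpha>2 \<and> \<alpha>2 < \<alpha>1 \<and> \<alpha>1 < \<beta>2 \<and> \<beta>2 < \<beta>3 \<and> \<alpha>2 + \<beta>2 > \<beta>4 + \<beta>3)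
    \<or> (\<alpha>2 < \<alpha>1 \<and> \<alpha>1 < \<beta>4 \<and> \<beta>4 < \<beta>2 \<and> \<beta>2 < \<beta>3)
    \<or> (\<alpha>2 < \<alpha>1 \<and> \<alpha>1 < \<beta>2 \<and> \<beta>2 < \<beta>3 \<and> \<beta>3 < \<beta>4))"
    using dd g2 g3 g4 s unfolding g5 g6 by smt
  then show ?thesis using d unfolding setB_def by simp
qed

lemma setB3_lemma:
  fixes \<alpha>1 \<alpha>2 \<beta>2 \<beta>3 :: real
  assumes d: "distinct [\<alpha>1, \<alpha>2, \<beta>2, \<beta>3]"
    and h2: "(\<beta>2 - \<alpha>1) * (\<alpha>1 - \<alpha>2) > 0"
    and h3: "(\<beta>3 - \<alpha>2) * (\<beta>3 - \<beta>2) > 0"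
  shows "(\<alpha>1, \<alpha>2, \<beta>2, \<beta>3) \<in> setB3"
proof -
  have g2: "(\<beta>2 < \<alpha>1 \<and> \<alpha>1 < \<alpha>2) \<or> (\<alpha>2 < \<alpha>1 \<and> \<alpha>1 < \<beta>2)"
    using h2 by (auto simp: zero_less_mult_iff)
  have g3: "(\<beta>3 > \<alpha>2 \<and> \<beta>3 > \<beta>2) \<or> (\<beta>3 < \<alpha>2 \<and> \<beta>3 < \<beta>2)"
    using h3 by (auto simp: zero_less_mult_iff)
  show ?thesis unfolding setB3_def
  proof (clarsimp)
    show "\<exists>\<beta>4. (\<alpha>1, \<alpha>2, \<beta>2, \<beta>3, \<beta>4) \<in> setB"
    proof (cases "\<beta>2 < \<alpha>1")
      case True
      show ?thesis
      proof (cases "\<beta>3 > \<alpha>2")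
        case True
        then show ?thesis using g2 g3 \<open>\<beta>2 < \<alpha>1\<close> d by (intro exI[of _ "\<beta>3 + 1"]) (auto simp: setB_def)
      next
        case False
        then show ?thesis using g2 g3 \<open>\<beta>2 < \<alpha>1\<close> d by (intro exI[of _ "(\<beta>2 + \<alpha>1)/2"]) (auto simp: setB_def)
      qed
    next
      case False
      show ?thesis
      proof (cases "\<beta>3 > \<beta>2")
        case True
        then show ?thesis using g2 g3 False d by (intro exI[of _ "\<beta>3 + 1"]) (auto simp: setB_def)
      next
        case F: False
        then show ?thesis using g2 g3 False d by (intro exI[of _ "\<beta>3 - 1"]) (auto simp: setB_def)
      qed
    qed
  qed
qed

lemma setB2_lemma:
  fixes \<alpha>1 \<alpha>2 \<beta>2 :: real
  assumes h2: "(\<beta>2 - \<alpha>1) * (\<alpha>1 - \<alpha>2) > 0"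
  shows "(\<alpha>1, \<alpha>2, \<beta>2) \<in> setB2"
proof -
  have g2: "(\<beta>2 < \<alpha>1 \<and> \<alpha>1 < \<alpha>2) \<or> (\<alpha>2 < \<alpha>1 \<and> \<alpha>1 < \<beta>2)"
    using h2 by (auto simp: zero_less_mult_iff)
  then show ?thesis
  proof
    assume g: "\<beta>2 < \<alpha>1 \<and> \<alpha>1 < \<alpha>2"
    show ?thesis unfolding setB2_def using g
      by (clarsimp, intro exI[of _ "\<alpha>2 + 1"] exI[of _ "\<alpha>2 + 2"]) (auto simp: setB_def)
  next
    assume g: "\<alpha>2 < \<alpha>1 \<and> \<alpha>1 < \<beta>2"
    show ?thesis unfolding setB2_def using g
      by (clarsimp, intro exI[of _ "\<beta>2 + 1"] exI[of _ "\<beta>2 + 2"]) (auto simp: setB_def)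
  qed
qed


lemma P_rec: "2 \<le> i \<Longrightarrow> P a b i x = (x - a i) * P a b (i-1) x - b i * P a b (i-2) x"
proof -
  assume "2 \<le> i"
  then obtain k where "i = Suc (Suc k)" by (metis add_2_eq_Suc le_Suc_ex)
  then show ?thesis by simp
qed

lemma P_two: "P a b k x = 0 \<Longrightarrow> P a b (k+2) x = (x - a (k+2)) * P a b (k+1) x"
  using P_rec[of "k+2" a b x] by simp

lemma P_three: "P a b k x = 0 \<Longrightarrow>
   P a b (k+3) x = ((x - a (k+3)) * (x - a (k+2)) - b (k+3)) * P a b (k+1) x"
  using P_rec[of "k+3" a b x] P_two[of a b k x] by (simp add: algebra_simps)

lemma nocommon: "(\<And>j. 2 \<le> j \<Longrightarrow> j \<le> k \<Longrightarrow> b j \<noteq> 0) \<Longrightarrow> 1 \<le> k \<Longrightarrow> P a b k x = 0 \<Longrightarrow> P a b (k-1) x = 0 \<Longrightarrow> False"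
proof (induction k)
  case 0 then show ?case by simp
next
  case (Suc k)
  show ?case
  proof (cases "k = 0")
    case True then show ?thesis using Suc.prems by simp
  next
    case False
    have "P a b (Suc k) x = (x - a (Suc k)) * P a b k x - b (Suc k) * P a b (k - 1) x"
      using P_rec[of "Suc k" a b x] False by simp
    then have "b (Suc k) * P a b (k - 1) x = 0" using Suc.prems by simp
    moreover have "b (Suc k) \<noteq> 0" using Suc.prems(1)[of "Suc k"] False by simp
    ultimately have "P a b (k - 1) x = 0" by simp
    then show False using Suc.IH Suc.prems False by simp
  qed
qed

lemma alpha_2: "alpha_seq \<alpha>1 \<alpha>2 (k+2) = alpha_seq \<alpha>1 \<alpha>2 k"
  by (simp add: alpha_seq_def)
lemma beta_3: "beta_seq \<beta>2 \<beta>3 \<beta>4 (k+3) = beta_seq \<beta>2 \<beta>3 \<beta>4 k"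
  by (simp add: beta_seq_def)
lemma alpha_cases: "alpha_seq \<alpha>1 \<alpha>2 k = \<alpha>1 \<and> alpha_seq \<alpha>1 \<alpha>2 (k+1) = \<alpha>2 \<or>
   alpha_seq \<alpha>1 \<alpha>2 k = \<alpha>2 \<and> alpha_seq \<alpha>1 \<alpha>2 (k+1) = \<alpha>1"
  by (simp add: alpha_seq_def)
lemma alpha_in: "alpha_seq \<alpha>1 \<alpha>2 k \<in> {\<alpha>1, \<alpha>2}"
  by (simp add: alpha_seq_def)
lemma beta_in: "beta_seq \<beta>2 \<beta>3 \<beta>4 k \<in> {\<beta>2, \<beta>3, \<beta>4}"
  by (simp add: beta_seq_def)
lemma Lam_cover: "{\<alpha>1, \<alpha>2, \<beta>2, \<beta>3, \<beta>4} = {alpha_seq \<alpha>1 \<alpha>2 k, alpha_seq \<alpha>1 \<alpha>2 (k+1),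
   beta_seq \<beta>2 \<beta>3 \<beta>4 k, beta_seq \<beta>2 \<beta>3 \<beta>4 (k+1), beta_seq \<beta>2 \<beta>3 \<beta>4 (k+2)}"
proof -
  have "k mod 3 = 0 \<or> k mod 3 = 1 \<or> k mod 3 = 2" by arith
  moreover have "(k+1) mod 3 = (if k mod 3 = 2 then 0 else k mod 3 + 1)"
    "(k+2) mod 3 = (if k mod 3 = 0 then 2 else k mod 3 - 1)" by (auto simp: mod_Suc)
  ultimately show ?thesis using alpha_cases[of \<alpha>1 \<alpha>2 k]
    unfolding beta_seq_def by auto
qed

lemma core:
  fixes \<alpha>1 \<alpha>2 \<beta>2 \<beta>3 \<beta>4 :: real and n :: nat and a b :: "nat \<Rightarrow> real"
  assumes dist: "distinct [\<alpha>1, \<alpha>2, \<beta>2, \<beta>3, \<beta>4]"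
    and sum_ne: "\<alpha>2 + \<beta>2 \<noteq> \<beta>3 + \<beta>4"
    and n: "n \<ge> 1"
    and bnz: "\<And>i. 2 \<le> i \<Longrightarrow> i \<le> n \<Longrightarrow> b i \<noteq> 0"
  shows "(a 1 = \<alpha>1 \<and> (\<forall>i. 2 \<le> i \<and> i \<le> n \<longrightarrow>
              {x \<in> {\<alpha>1, \<alpha>2, \<beta>2, \<beta>3, \<beta>4}. P a b i x = 0} = {alpha_seq \<alpha>1 \<alpha>2 i, beta_seq \<beta>2 \<beta>3 \<beta>4 i}))
      \<longleftrightarrow>
          ((\<forall>i. 1 \<le> i \<and> i \<le> n \<and> odd i \<longrightarrow> a i = \<alpha>1) \<and>
           (2 \<le> n \<longrightarrow> a 2 = - \<alpha>1 + \<alpha>2 + \<beta>2) \<and>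
           (\<forall>i. 2 < i \<and> i \<le> n \<and> even i \<longrightarrow> a i = \<alpha>2) \<and>
           (2 \<le> n \<longrightarrow> b 2 = (\<beta>2 - \<alpha>1) * (\<alpha>1 - \<alpha>2)) \<and>
           (3 \<le> n \<longrightarrow> b 3 = (\<beta>3 - \<alpha>2) * (\<beta>3 - \<beta>2)) \<and>
           (4 \<le> n \<longrightarrow> b 4 = (\<beta>4 - \<alpha>1) * (\<beta>3 - \<beta>4) * (\<alpha>2 + \<beta>2 - \<beta>3 - \<beta>4) / (\<beta>4 - \<beta>2)) \<and>
           (\<forall>i. 4 < i \<and> i \<le> n \<longrightarrow>
              b i = (beta_seq \<beta>2 \<beta>3 \<beta>4 i - \<alpha>1) * (beta_seq \<beta>2 \<beta>3 \<beta>4 i - \<alpha>2)))"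
  (is "?L \<longleftrightarrow> ?R")
proof -
  let ?A = "alpha_seq \<alpha>1 \<alpha>2" and ?B = "beta_seq \<beta>2 \<beta>3 \<beta>4"
  let ?Lam = "{\<alpha>1, \<alpha>2, \<beta>2, \<beta>3, \<beta>4}"
  have dd: "\<alpha>1 \<noteq> \<alpha>2" "\<alpha>1 \<noteq> \<beta>2" "\<alpha>1 \<noteq> \<beta>3" "\<alpha>1 \<noteq> \<beta>4" "\<alpha>2 \<noteq> \<beta>2" "\<alpha>2 \<noteq> \<beta>3" "\<alpha>2 \<noteq> \<beta>4"
     "\<beta>2 \<noteq> \<beta>3" "\<beta>2 \<noteq> \<beta>4" "\<beta>3 \<noteq> \<beta>4" using dist by auto
  have NC: False if "1 \<le> k" "k \<le> n" "P a b k x = 0" "P a b (k-1) x = 0" for k x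
    using nocommon[of k b a x] bnz that by auto
  have AB: "?A i \<noteq> ?B j" for i j using alpha_in[of \<alpha>1 \<alpha>2 i] beta_in[of \<beta>2 \<beta>3 \<beta>4 j] dd by auto
  have A1: "?A 1 = \<alpha>1" and A2: "?A 2 = \<alpha>2" by (simp_all add: alpha_seq_def)
  have B2: "?B 2 = \<beta>2" and B3: "?B 3 = \<beta>3" and B4: "?B 4 = \<beta>4" and B5: "?B 5 = \<beta>2"
    by (simp_all add: beta_seq_def)
  have Aodd: "?A i = \<alpha>1" if "odd i" for i using that by (simp add: alpha_seq_def)
  have Aeven: "?A i = \<alpha>2" if "even i" for i using that by (simp add: alpha_seq_def)
  have Aprod: "(x - ?A (k+1)) * (x - ?A k) = (x - \<alpha>1) * (x - \<alpha>2)" for x k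
    using alpha_cases[of \<alpha>1 \<alpha>2 k] by auto
  have P1: "P a b 1 x = x - a 1" for x by simp
  have P2: "P a b 2 x = (x - a 2) * (x - a 1) - b 2" for x by (simp add: numeral_2_eq_2)
  have P3: "P a b 3 x = (x - a 3) * P a b 2 x - b 3 * (x - a 1)" for x
    using P_rec[of 3 a b x] by simp
  have P4: "P a b 4 x = (x - a 4) * P a b 3 x - b 4 * P a b 2 x" for x
    using P_rec[of 4 a b x] by simp
  show ?thesis
  proof
    assume L: ?L
    have a1: "a 1 = \<alpha>1" using L by simp
    have H: "{x \<in> ?Lam. P a b i x = 0} = {?A i, ?B i}" if "2 \<le> i" "i \<le> n" for i
      using L that by blast
    have rootA: "P a b i (?A i) = 0" if "1 \<le> i" "i \<le> n" for i
    proof (cases "i = 1")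
      case True then show ?thesis using a1 A1 by simp
    next
      case False then show ?thesis using H[of i] that by auto
    qed
    have rootB: "P a b i (?B i) = 0" if "2 \<le> i" "i \<le> n" for i
      using H[of i] that by auto
    have aA: "a i = ?A i" if "3 \<le> i" "i \<le> n" for i
    proof -
      define k where "k = i - 2"
      have k: "i = k + 2" "1 \<le> k" using that unfolding k_def by auto
      have Ak: "?A i = ?A k" using k alpha_2 by simp
      have r: "P a b k (?A k) = 0" using rootA[of k] k that by simp
      have "P a b i (?A k) = (?A k - a i) * P a b (k+1) (?A k)" using P_two[OF r] k by simp
      moreover have "P a b i (?A k) = 0" using rootA[of i] that Ak by simp
      moreover have "P a b (k+1) (?A k) \<noteq> 0" using NC[of "k+1" "?A k"] r k that by auto
      ultimately show ?thesis using Ak by simp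
    qed
    have a2b2: "a 2 = - \<alpha>1 + \<alpha>2 + \<beta>2 \<and> b 2 = (\<beta>2 - \<alpha>1) * (\<alpha>1 - \<alpha>2)" if "2 \<le> n"
    proof -
      have h1: "(\<alpha>2 - a 2) * (\<alpha>2 - \<alpha>1) - b 2 = 0" using rootA[of 2] that P2 a1 A2 by simp
      have h2: "(\<beta>2 - a 2) * (\<beta>2 - \<alpha>1) - b 2 = 0" using rootB[of 2] that P2 a1 B2 by simp
      have "(\<alpha>2 - \<beta>2) * (\<alpha>2 + \<beta>2 - \<alpha>1 - a 2) = ((\<alpha>2 - a 2) * (\<alpha>2 - \<alpha>1) - b 2) - ((\<beta>2 - a 2) * (\<beta>2 - \<alpha>1) - b 2)"
        by (simp add: algebra_simps)
      then have "(\<alpha>2 - \<beta>2) * (\<alpha>2 + \<beta>2 - \<alpha>1 - a 2) = 0" using h1 h2 by simp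
      then have "\<alpha>2 + \<beta>2 - \<alpha>1 - a 2 = 0" using dd by simp
      then have e: "a 2 = - \<alpha>1 + \<alpha>2 + \<beta>2" by linarith
      have "b 2 = (\<alpha>2 - a 2) * (\<alpha>2 - \<alpha>1)" using h1 by simp
      then show ?thesis using e by (simp add: algebra_simps)
    qed
    have P2f: "P a b 2 x = (x - \<alpha>2) * (x - \<beta>2)" if "2 \<le> n" for x
    proof -
      have e: "a 2 = - \<alpha>1 + \<alpha>2 + \<beta>2" "b 2 = (\<beta>2 - \<alpha>1) * (\<alpha>1 - \<alpha>2)" using a2b2[OF that] by auto
      show ?thesis unfolding P2[of x] e a1 by (simp add: algebra_simps)
    qed
    have b3: "b 3 = (\<beta>3 - \<alpha>2) * (\<beta>3 - \<beta>2)" if "3 \<le> n"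
    proof -
      have a3: "a 3 = \<alpha>1" using aA[of 3] that by (simp add: alpha_seq_def)
      have n2: "2 \<le> n" using that by simp
      have r: "P a b 3 \<beta>3 = 0" using rootB[of 3] that B3 by simp
      have "P a b 3 \<beta>3 = (\<beta>3 - \<alpha>1) * ((\<beta>3 - \<alpha>2) * (\<beta>3 - \<beta>2) - b 3)"
        unfolding P3[of \<beta>3] P2f[OF n2, of \<beta>3] a3 a1 by (simp add: algebra_simps)
      then have "(\<beta>3 - \<alpha>1) * ((\<beta>3 - \<alpha>2) * (\<beta>3 - \<beta>2) - b 3) = 0" using r by simp
      then show ?thesis using dd by simp
    qed
    have b4: "b 4 = (\<beta>4 - \<alpha>1) * (\<beta>3 - \<beta>4) * (\<alpha>2 + \<beta>2 - \<beta>3 - \<beta>4) / (\<beta>4 - \<beta>2)" if "4 \<le> n"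
    proof -
      have a4: "a 4 = \<alpha>2" using aA[of 4] that by (simp add: alpha_seq_def)
      have a3: "a 3 = \<alpha>1" using aA[of 3] that by (simp add: alpha_seq_def)
      have n2: "2 \<le> n" "3 \<le> n" using that by simp_all
      have r: "P a b 4 \<beta>4 = 0" using rootB[of 4] that B4 by simp
      have "P a b 4 \<beta>4 = (\<beta>4 - \<alpha>2) * ((\<beta>4 - \<alpha>1) * (\<beta>3 - \<beta>4) * (\<alpha>2 + \<beta>2 - \<beta>3 - \<beta>4) - b 4 * (\<beta>4 - \<beta>2))"
        unfolding P4[of \<beta>4] P3[of \<beta>4] P2f[OF n2(1), of \<beta>4] a4 a3 a1 b3[OF n2(2)] by (simp add: algebra_simps)
      then have "(\<beta>4 - \<alpha>2) * ((\<beta>4 - \<alpha>1) * (\<beta>3 - \<beta>4) * (\<alpha>2 + \<beta>2 - \<beta>3 - \<beta>4) - b 4 * (\<beta>4 - \<beta>2)) = 0"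
        using r by simp
      then have "b 4 * (\<beta>4 - \<beta>2) = (\<beta>4 - \<alpha>1) * (\<beta>3 - \<beta>4) * (\<alpha>2 + \<beta>2 - \<beta>3 - \<beta>4)" using dd by simp
      then show ?thesis using dd by (simp add: eq_divide_eq)
    qed
    have bi: "b i = (?B i - \<alpha>1) * (?B i - \<alpha>2)" if "4 < i" "i \<le> n" for i
    proof -
      define k where "k = i - 3"
      have k: "i = k + 3" "2 \<le> k" using that unfolding k_def by auto
      have Bk: "?B i = ?B k" using k beta_3 by simp
      have r: "P a b k (?B k) = 0" using rootB[of k] k that by simp
      have "P a b i (?B k) = ((?B k - a (k+3)) * (?B k - a (k+2)) - b (k+3)) * P a b (k+1) (?B k)"
        using P_three[OF r] k by simp
      moreover have "P a b i (?B k) = 0" using rootB[of i] that Bk by simp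
      moreover have "P a b (k+1) (?B k) \<noteq> 0" using NC[of "k+1" "?B k"] r k that by auto
      ultimately have "b i = (?B k - a (k+3)) * (?B k - a (k+2))" using k by simp
      moreover have "a (k+3) = ?A (k+3)" "a (k+2) = ?A (k+2)" using aA k that by auto
      ultimately show ?thesis using Bk Aprod[of "?B k" "k+2"] by (simp add: numeral_3_eq_3 add.commute)
    qed
    show ?R
    proof (intro conjI allI impI)
      fix i assume h: "1 \<le> i \<and> i \<le> n \<and> odd i"
      show "a i = \<alpha>1"
      proof (cases "i = 1")
        case True then show ?thesis using a1 by simp
      next
        case False
        then have "3 \<le> i" using h by presburger
        then show ?thesis using aA[of i] Aodd[of i] h by auto
      qed
    next
      fix i assume "2 < i \<and> i \<le> n \<and> even i"
      then show "a i = \<alpha>2" using aA[of i] Aeven[of i] by auto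
    qed (use a2b2 b3 b4 bi in auto)
  next
    assume R: ?R
    have a1: "a 1 = \<alpha>1" using R n by auto
    have aA: "a i = ?A i" if "3 \<le> i" "i \<le> n" for i
      using R that Aodd[of i] Aeven[of i] by (cases "odd i") auto
    have P2f: "P a b 2 x = (x - \<alpha>2) * (x - \<beta>2)" if "2 \<le> n" for x
    proof -
      have e: "a 2 = - \<alpha>1 + \<alpha>2 + \<beta>2" "b 2 = (\<beta>2 - \<alpha>1) * (\<alpha>1 - \<alpha>2)" using R that by auto
      show ?thesis unfolding P2[of x] e a1 by (simp add: algebra_simps)
    qed
    have rootA: "P a b i (?A i) = 0" if "1 \<le> i" "i \<le> n" for i
      using that
    proof (induction i rule: less_induct)
      case (less i)
      show ?case
      proof (cases "i \<le> 2")
        case True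
        then have "i = 1 \<or> i = 2" using less.prems by auto
        then show ?thesis using a1 A1 A2 P2f less.prems by auto
      next
        case False
        define k where "k = i - 2"
        have k: "i = k + 2" "1 \<le> k" using False unfolding k_def by auto
        have r: "P a b k (?A k) = 0" using less.IH[of k] k less.prems by simp
        show ?thesis using P_two[OF r] aA[of i] k less.prems alpha_2 by simp
      qed
    qed
    have P3f: "P a b 3 x = (x - \<alpha>1) * ((x - \<alpha>2) * (x - \<beta>2) - (\<beta>3 - \<alpha>2) * (\<beta>3 - \<beta>2))" if "3 \<le> n" for x
    proof -
      have e: "a 3 = \<alpha>1" "b 3 = (\<beta>3 - \<alpha>2) * (\<beta>3 - \<beta>2)" "2 \<le> n" using R that by auto
      show ?thesis unfolding P3[of x] P2f[OF e(3), of x] e(1,2) a1 by (simp add: algebra_simps)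
    qed
    have rootB: "P a b i (?B i) = 0" if "2 \<le> i" "i \<le> n" for i
      using that
    proof (induction i rule: less_induct)
      case (less i)
      consider "i = 2" | "i = 3" | "i = 4" | "4 < i" using less.prems by linarith
      then show ?case
      proof cases
        case 1 then show ?thesis using B2 P2f less.prems by simp
      next
        case 2 then show ?thesis using B3 P3f less.prems by simp
      next
        case 3
        have b4: "b 4 * (\<beta>4 - \<beta>2) = (\<beta>4 - \<alpha>1) * (\<beta>3 - \<beta>4) * (\<alpha>2 + \<beta>2 - \<beta>3 - \<beta>4)"
          using R less.prems 3 dd by (simp add: eq_divide_eq)
        have a4: "a 4 = \<alpha>2" using aA[of 4] less.prems 3 by (simp add: alpha_seq_def)
        have n2: "2 \<le> n" "3 \<le> n" using less.prems 3 by simp_all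
        have "P a b 4 \<beta>4 = (\<beta>4 - \<alpha>2) * ((\<beta>4 - \<alpha>1) * (\<beta>3 - \<beta>4) * (\<alpha>2 + \<beta>2 - \<beta>3 - \<beta>4) - b 4 * (\<beta>4 - \<beta>2))"
          unfolding P4[of \<beta>4] P3f[OF n2(2), of \<beta>4] P2f[OF n2(1), of \<beta>4] a4 by (simp add: algebra_simps)
        then show ?thesis using b4 B4 3 by simp
      next
        case 4
        define k where "k = i - 3"
        have k: "i = k + 3" "2 \<le> k" using 4 unfolding k_def by auto
        have Bk: "?B i = ?B k" using k beta_3 by simp
        have r: "P a b k (?B k) = 0" using less.IH[of k] k less.prems by simp
        have bi: "b i = (?B i - \<alpha>1) * (?B i - \<alpha>2)" using R 4 less.prems by auto
        have "a (k+3) = ?A (k+3)" "a (k+2) = ?A (k+2)" using aA k less.prems by auto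
        then have "(?B k - a (k+3)) * (?B k - a (k+2)) = (?B k - \<alpha>1) * (?B k - \<alpha>2)"
          using Aprod[of "?B k" "k+2"] by (simp add: numeral_3_eq_3 add.commute)
        then show ?thesis using P_three[OF r] k bi Bk by simp
      qed
    qed
    have main: "{x \<in> ?Lam. P a b i x = 0} = {?A i, ?B i}" if iH: "2 \<le> i" "i \<le> n" for i
    proof
      show "{?A i, ?B i} \<subseteq> {x \<in> ?Lam. P a b i x = 0}"
        using rootA[of i] rootB[of i] that alpha_in[of \<alpha>1 \<alpha>2 i] beta_in[of \<beta>2 \<beta>3 \<beta>4 i] by auto
    next
      have nA: "P a b i (?A (i+1)) \<noteq> 0"
      proof
        assume z: "P a b i (?A (i+1)) = 0"
        have "?A (i+1) = ?A (i-1)" using that alpha_2[of \<alpha>1 \<alpha>2 "i-1"] by simp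
        then show False using NC[of i "?A (i+1)"] rootA[of "i-1"] z that by auto
      qed
      have nB: "P a b i (?B (i+1)) \<noteq> 0 \<and> P a b i (?B (i+2)) \<noteq> 0"
      proof -
        consider "i = 2" | "i = 3" | "4 \<le> i" using iH by linarith
        then show ?thesis
        proof cases
          case 1
          have e: "?B (i+1) = \<beta>3" "?B (i+2) = \<beta>4" using 1 by (simp_all add: beta_seq_def)
          have n2: "2 \<le> n" using iH 1 by simp
          show ?thesis unfolding e using P2f[OF n2] 1 dd by simp
        next
          case 2
          have "(\<beta>4 - \<alpha>2) * (\<beta>4 - \<beta>2) - (\<beta>3 - \<alpha>2) * (\<beta>3 - \<beta>2) = (\<beta>4 - \<beta>3) * (\<beta>4 + \<beta>3 - \<alpha>2 - \<beta>2)"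
            by (simp add: algebra_simps)
          moreover have "(\<beta>4 - \<beta>3) * (\<beta>4 + \<beta>3 - \<alpha>2 - \<beta>2) \<noteq> 0"
          proof -
            have h: "\<beta>4 + \<beta>3 - \<alpha>2 - \<beta>2 \<noteq> 0"
            proof
              assume "\<beta>4 + \<beta>3 - \<alpha>2 - \<beta>2 = 0"
              then have "\<alpha>2 + \<beta>2 = \<beta>3 + \<beta>4" by linarith
              then show False using sum_ne by simp
            qed
            show ?thesis using h dd by simp
          qed
          moreover have "(\<beta>2 - \<alpha>2) * (\<beta>2 - \<beta>2) - (\<beta>3 - \<alpha>2) * (\<beta>3 - \<beta>2) \<noteq> 0" using dd by simp
          moreover have e: "?B (i+1) = \<beta>4" "?B (i+2) = \<beta>2" using 2 by (simp_all add: beta_seq_def)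
          moreover have n3: "3 \<le> n" using iH 2 by simp
          ultimately show ?thesis using P3f[OF n3, of \<beta>4] P3f[OF n3, of \<beta>2] 2 dd by simp
        next
          case 3
          define k where "k = i - 2"
          have k: "i = k + 2" "2 \<le> k" using 3 unfolding k_def by auto
          have e1: "?B (i+1) = ?B k" using k by (simp add: beta_seq_def)
          have e2: "?B (i+2) = ?B (i-1)"
          proof -
            have "i + 2 = (i - 1) + 3" using k by simp
            then show ?thesis by (simp only: beta_3)
          qed
          have r: "P a b k (?B k) = 0" using rootB[of k] k that by simp
          have x1: "P a b i (?B k) \<noteq> 0"
          proof -
            have "P a b i (?B k) = (?B k - a i) * P a b (k+1) (?B k)" using P_two[OF r] k by simp
            moreover have "?B k - a i \<noteq> 0" using aA[of i] 3 that AB[of i k] by simp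
            moreover have "P a b (k+1) (?B k) \<noteq> 0" using NC[of "k+1" "?B k"] r k that by auto
            ultimately show ?thesis by simp
          qed
          have x2: "P a b i (?B (i-1)) \<noteq> 0"
            using NC[of i "?B (i-1)"] rootB[of "i-1"] that 3 by auto
          show ?thesis using e1 e2 x1 x2 by simp
        qed
      qed
      show "{x \<in> ?Lam. P a b i x = 0} \<subseteq> {?A i, ?B i}"
        using nA nB Lam_cover[of \<alpha>1 \<alpha>2 \<beta>2 \<beta>3 \<beta>4 i] by auto
    qed
    show ?L using a1 main by blast
  qed
qed

theorem mainTheorem5:
  fixes \<alpha>1 \<alpha>2 \<beta>2 \<beta>3 \<beta>4 :: real and n :: nat and a b :: "nat \<Rightarrow> real"
  assumes dist: "distinct [\<alpha>1, \<alpha>2, \<beta>2, \<beta>3, \<beta>4]"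
    and sum_ne: "\<alpha>2 + \<beta>2 \<noteq> \<beta>3 + \<beta>4"
    and n: "n \<ge> 1"
    and bpos: "\<forall>i. 2 \<le> i \<and> i \<le> n \<longrightarrow> b i > 0"
  defines "\<Lambda> \<equiv> {\<alpha>1, \<alpha>2, \<beta>2, \<beta>3, \<beta>4}"
  shows "((spectrum (Cmat a b 1) = {\<alpha>1} \<and>
           (\<forall>i. 2 \<le> i \<and> i \<le> n \<longrightarrow>
              spectrum (Cmat a b i) \<inter> \<Lambda> = {alpha_seq \<alpha>1 \<alpha>2 i, beta_seq \<beta>2 \<beta>3 \<beta>4 i}))
      \<longleftrightarrow>
          ((\<forall>i. 1 \<le> i \<and> i \<le> n \<and> odd i \<longrightarrow> a i = \<alpha>1) \<and>
           (2 \<le> n \<longrightarrow> a 2 = - \<alpha>1 + \<alpha>2 + \<beta>2) \<and>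
           (\<forall>i. 2 < i \<and> i \<le> n \<and> even i \<longrightarrow> a i = \<alpha>2) \<and>
           (2 \<le> n \<longrightarrow> b 2 = (\<beta>2 - \<alpha>1) * (\<alpha>1 - \<alpha>2)) \<and>
           (3 \<le> n \<longrightarrow> b 3 = (\<beta>3 - \<alpha>2) * (\<beta>3 - \<beta>2)) \<and>
           (4 \<le> n \<longrightarrow> b 4 = (\<beta>4 - \<alpha>1) * (\<beta>3 - \<beta>4) * (\<alpha>2 + \<beta>2 - \<beta>3 - \<beta>4) / (\<beta>4 - \<beta>2)) \<and>
           (\<forall>i. 4 < i \<and> i \<le> n \<longrightarrow>
              b i = (beta_seq \<beta>2 \<beta>3 \<beta>4 i - \<alpha>1) * (beta_seq \<beta>2 \<beta>3 \<beta>4 i - \<alpha>2))))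
      \<and>
      ((spectrum (Cmat a b 1) = {\<alpha>1} \<and>
           (\<forall>i. 2 \<le> i \<and> i \<le> n \<longrightarrow>
              spectrum (Cmat a b i) \<inter> \<Lambda> = {alpha_seq \<alpha>1 \<alpha>2 i, beta_seq \<beta>2 \<beta>3 \<beta>4 i}))
        \<longrightarrow> (4 \<le> n \<longrightarrow> (\<alpha>1, \<alpha>2, \<beta>2, \<beta>3, \<beta>4) \<in> setB)
          \<and> (n = 3 \<longrightarrow> (\<alpha>1, \<alpha>2, \<beta>2, \<beta>3) \<in> setB3)
          \<and> (n = 2 \<longrightarrow> (\<alpha>1, \<alpha>2, \<beta>2) \<in> setB2))"
proof -
  let ?L = "spectrum (Cmat a b 1) = {\<alpha>1} \<and>
           (\<forall>i. 2 \<le> i \<and> i \<le> n \<longrightarrow>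
              spectrum (Cmat a b i) \<inter> \<Lambda> = {alpha_seq \<alpha>1 \<alpha>2 i, beta_seq \<beta>2 \<beta>3 \<beta>4 i})"
  have bnz: "\<And>i. 2 \<le> i \<Longrightarrow> i \<le> n \<Longrightarrow> b i \<noteq> 0" using bpos by force
  have S1: "spectrum (Cmat a b 1) = {\<alpha>1} \<longleftrightarrow> a 1 = \<alpha>1"
  proof -
    have "spectrum (Cmat a b 1) = {a 1}" using spec_P[of 1 a b] by auto
    then show ?thesis by auto
  qed
  have Si: "spectrum (Cmat a b i) \<inter> \<Lambda> = {x \<in> {\<alpha>1, \<alpha>2, \<beta>2, \<beta>3, \<beta>4}. P a b i x = 0}" if "2 \<le> i" for i
    using spec_P[of i a b] that unfolding \<Lambda>_def by auto
  have eqL: "?L \<longleftrightarrow> (a 1 = \<alpha>1 \<and> (\<forall>i. 2 \<le> i \<and> i \<le> n \<longrightarrow>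
              {x \<in> {\<alpha>1, \<alpha>2, \<beta>2, \<beta>3, \<beta>4}. P a b i x = 0} = {alpha_seq \<alpha>1 \<alpha>2 i, beta_seq \<beta>2 \<beta>3 \<beta>4 i}))"
    using S1 Si by auto
  have part1: "?L \<longleftrightarrow> ((\<forall>i. 1 \<le> i \<and> i \<le> n \<and> odd i \<longrightarrow> a i = \<alpha>1) \<and>
           (2 \<le> n \<longrightarrow> a 2 = - \<alpha>1 + \<alpha>2 + \<beta>2) \<and>
           (\<forall>i. 2 < i \<and> i \<le> n \<and> even i \<longrightarrow> a i = \<alpha>2) \<and>
           (2 \<le> n \<longrightarrow> b 2 = (\<beta>2 - \<alpha>1) * (\<alpha>1 - \<alpha>2)) \<and>
           (3 \<le> n \<longrightarrow> b 3 = (\<beta>3 - \<alpha>2) * (\<beta>3 - \<beta>2)) \<and>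
           (4 \<le> n \<longrightarrow> b 4 = (\<beta>4 - \<alpha>1) * (\<beta>3 - \<beta>4) * (\<alpha>2 + \<beta>2 - \<beta>3 - \<beta>4) / (\<beta>4 - \<beta>2)) \<and>
           (\<forall>i. 4 < i \<and> i \<le> n \<longrightarrow>
              b i = (beta_seq \<beta>2 \<beta>3 \<beta>4 i - \<alpha>1) * (beta_seq \<beta>2 \<beta>3 \<beta>4 i - \<alpha>2)))"
    unfolding eqL by (rule core[OF dist sum_ne n bnz])
  have part2: "(4 \<le> n \<longrightarrow> (\<alpha>1, \<alpha>2, \<beta>2, \<beta>3, \<beta>4) \<in> setB)
          \<and> (n = 3 \<longrightarrow> (\<alpha>1, \<alpha>2, \<beta>2, \<beta>3) \<in> setB3)
          \<and> (n = 2 \<longrightarrow> (\<alpha>1, \<alpha>2, \<beta>2) \<in> setB2)" if L: ?L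
  proof -
    have R2: "2 \<le> n \<Longrightarrow> b 2 = (\<beta>2 - \<alpha>1) * (\<alpha>1 - \<alpha>2)"
      and R3: "3 \<le> n \<Longrightarrow> b 3 = (\<beta>3 - \<alpha>2) * (\<beta>3 - \<beta>2)"
      and R4: "4 \<le> n \<Longrightarrow> b 4 = (\<beta>4 - \<alpha>1) * (\<beta>3 - \<beta>4) * (\<alpha>2 + \<beta>2 - \<beta>3 - \<beta>4) / (\<beta>4 - \<beta>2)"
      using part1 L by auto
    have p2: "2 \<le> n \<Longrightarrow> (\<beta>2 - \<alpha>1) * (\<alpha>1 - \<alpha>2) > 0" using R2 bpos[rule_format, of 2] by auto
    have p3: "3 \<le> n \<Longrightarrow> (\<beta>3 - \<alpha>2) * (\<beta>3 - \<beta>2) > 0" using R3 bpos[rule_format, of 3] by auto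
    have p4: "4 \<le> n \<Longrightarrow> (\<beta>4 - \<alpha>1) * (\<beta>3 - \<beta>4) * (\<alpha>2 + \<beta>2 - \<beta>3 - \<beta>4) / (\<beta>4 - \<beta>2) > 0"
      using R4 bpos[rule_format, of 4] by auto
    have d4: "distinct [\<alpha>1, \<alpha>2, \<beta>2, \<beta>3]" using dist by auto
    show ?thesis
      using setB_lemma[OF dist sum_ne] setB3_lemma[OF d4] setB2_lemma p2 p3 p4 by auto
  qed
  show ?thesis using part1 part2 by blast
qed

end
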